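(* Let $A,W\in \mathbb{C}^{n\times n}$. Then $A^{\mathrm{cEP},W}=[A^{D,W}W]^2(A^{D,W})^{\mathrm{core},W}$.
   Context: $\mathbb{C}^{n\times n}$ carries the conjugate transpose involution. With $k=\max\{\mathrm{ind}(AW),\mathrm{ind}(WA)\}$, the weighted core-EP inverse $A^{\mathrm{cEP},W}$ is the unique $X$ with $WAWX=(WA)^k[(WA)^k]^{\dagger}$ and $\mathcal{R}(X)\subseteq\mathcal{R}((AW)^k)$. $A^{D,W}$ is the $W$-weighted Drazin inverse of $A$ (the unique $X$ with $AWX=XWA$, $XWAWX=X$, $A-AWXWA$ nilpotent). For $B\in\mathbb{C}^{n\times n}$, the $W$-weighted core inverse $B^{\mathrm{core},W}$ is the unique $X$ with $B(WX)^2=X$, $(WBWX)^*=WBWX$, $XW(BW)^2=BW$; the claim includes that it exists for $B=A^{D,W}$. *)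

theory Defs
  imports "HOL-Analysis.Analysis"
begin

type_synonym 'n cmat = "complex^'n^'n"

primrec mpow :: "'n::finite cmat \<Rightarrow> nat \<Rightarrow> 'n cmat" where
  "mpow M 0 = mat 1"
| "mpow M (Suc k) = M ** mpow M k"

definition ctrans :: "'n::finite cmat \<Rightarrow> 'n cmat" where
  "ctrans M = (\<chi> i j. cnj (M $ j $ i))"

definition mp_inv :: "'n::finite cmat \<Rightarrow> 'n cmat" where
  "mp_inv M = (THE X. M ** X ** M = M \<and> X ** M ** X = X
      \<and> ctrans (M ** X) = M ** X \<and> ctrans (X ** M) = X ** M)"

definition ind :: "'n::finite cmat \<Rightarrow> nat" where
  "ind M = (LEAST k. rank (mpow M k) = rank (mpow M (Suc k)))"

definition mrange :: "'n::finite cmat \<Rightarrow> (complex^'n) set" where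
  "mrange M = {M *v x | x. True}"

definition nilpotent_mat :: "'n::finite cmat \<Rightarrow> bool" where
  "nilpotent_mat M \<longleftrightarrow> (\<exists>m. mpow M m = 0)"

text \<open>W-weighted Drazin inverse (nilpotency of A - AWXWA read as W-nilpotency).\<close>
definition is_wdrazin :: "'n::finite cmat \<Rightarrow> 'n cmat \<Rightarrow> 'n cmat \<Rightarrow> bool" where
  "is_wdrazin A W X \<longleftrightarrow> A ** W ** X = X ** W ** A \<and> X ** W ** A ** W ** X = X
     \<and> nilpotent_mat ((A - A ** W ** X ** W ** A) ** W)"

definition wdrazin :: "'n::finite cmat \<Rightarrow> 'n cmat \<Rightarrow> 'n cmat" where
  "wdrazin A W = (THE X. is_wdrazin A W X)"

definition is_wcoreEP :: "'n::finite cmat \<Rightarrow> 'n cmat \<Rightarrow> 'n cmat \<Rightarrow> bool" where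
  "is_wcoreEP A W X \<longleftrightarrow>
     (let k = max (ind (A ** W)) (ind (W ** A)) in
       W ** A ** W ** X = mpow (W ** A) k ** mp_inv (mpow (W ** A) k)
       \<and> mrange X \<subseteq> mrange (mpow (A ** W) k))"

definition wcoreEP :: "'n::finite cmat \<Rightarrow> 'n cmat \<Rightarrow> 'n cmat" where
  "wcoreEP A W = (THE X. is_wcoreEP A W X)"

definition is_wcore :: "'n::finite cmat \<Rightarrow> 'n cmat \<Rightarrow> 'n cmat \<Rightarrow> bool" where
  "is_wcore B W X \<longleftrightarrow> B ** ((W ** X) ** (W ** X)) = X
     \<and> ctrans (W ** B ** W ** X) = W ** B ** W ** X
     \<and> X ** W ** ((B ** W) ** (B ** W)) = B ** W"

definition wcore :: "'n::finite cmat \<Rightarrow> 'n cmat \<Rightarrow> 'n cmat" where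
  "wcore B W = (THE X. is_wcore B W X)"

end

theory Submission
  imports Defs
begin


lemma mvec_axis: "(P *v axis j 1) $ i = P $ i $ (j::'n::finite)" for P :: "'a::semiring_1^'n^'m"
  by (simp add: matrix_vector_mult_def axis_def if_distrib if_distribR cong: if_cong)

lemma cspan: "vec.span (columns (Q::'a::field^'n^'m)) = range ((*v) Q)"
proof
  show "vec.span (columns Q) \<subseteq> range ((*v) Q)"
  proof (rule vec.span_minimal)
    show "columns Q \<subseteq> range ((*v) Q)"
    proof
      fix x assume "x \<in> columns Q"
      then obtain j where "x = column j Q" by (auto simp: columns_def)
      then have "x = Q *v axis j 1" by (simp add: vec_eq_iff mvec_axis column_def)
      then show "x \<in> range ((*v) Q)" by blast
    qed
    show "vec.subspace (range ((*v) Q))"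
      using vec.subspace_image[OF vec.subspace_UNIV, of Q] by simp
  qed
  show "range ((*v) Q) \<subseteq> vec.span (columns Q)"
    using matrix_vector_mult_in_columnspace_gen by blast
qed

lemma range_fact:
  fixes P :: "'a::field^'n^'m" and Q :: "'a^'p^'m"
  assumes "range ((*v) P) \<subseteq> range ((*v) Q)"
  shows "\<exists>Y. P = Q ** Y"
proof -
  have "\<forall>j. \<exists>y. P *v axis j 1 = Q *v y" using assms by blast
  then obtain y where y: "\<And>j. P *v axis j 1 = Q *v y j" by metis
  define Y :: "'a^'n^'p" where "Y = (\<chi> l j. y j $ l)"
  have "P = Q ** Y"
  proof (simp add: vec_eq_iff, intro allI)
    fix i j
    have "P $ i $ j = (Q *v y j) $ i" by (metis y mvec_axis)
    also have "\<dots> = (Q ** Y) $ i $ j"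
      by (simp add: matrix_vector_mult_def matrix_matrix_mult_def Y_def)
    finally show "P $ i $ j = (Q ** Y) $ i $ j" .
  qed
  then show ?thesis by blast
qed

lemma rank_cols: "rank A = vec.dim (range ((*v) (transpose A)))"
  by (metis cspan columns_transpose row_rank_def_gen vec.dim_span)

lemma range_mul_sub: "range ((*v) (P ** Q)) \<subseteq> range ((*v) P)"
  by (auto simp flip: matrix_vector_mul_assoc)

lemma rank_mul_le: "rank (A ** B) \<le> rank (B::'a::field^'n^'n)"
  unfolding rank_cols matrix_transpose_mul
  by (rule vec.dim_subset[OF range_mul_sub])

lemma rank_mul_eq:
  fixes A B :: "'a::field^'n^'n"
  assumes "rank (A ** B) = rank B"
  shows "\<exists>Z. B = Z ** (A ** B)"
proof -
  have sub: "range ((*v) (transpose B ** transpose A)) \<subseteq> range ((*v) (transpose B))"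
    by (rule range_mul_sub)
  have "range ((*v) (transpose B ** transpose A)) = range ((*v) (transpose B))"
  proof (rule vec.subspace_dim_equal[OF _ _ sub])
    show "vec.subspace (range ((*v) (transpose B ** transpose A)))"
      using vec.subspace_image[OF vec.subspace_UNIV, of "transpose B ** transpose A"] by simp
    show "vec.subspace (range ((*v) (transpose B)))"
      using vec.subspace_image[OF vec.subspace_UNIV, of "transpose B"] by simp
    show "vec.dim (range ((*v) (transpose B))) \<le> vec.dim (range ((*v) (transpose B ** transpose A)))"
      using assms unfolding rank_cols matrix_transpose_mul by simp
  qed
  then obtain Y where "transpose B = (transpose B ** transpose A) ** Y"
    using range_fact[of "transpose B" "transpose B ** transpose A"] by auto
  then have "transpose (transpose B) = transpose ((transpose B ** transpose A) ** Y)" by simp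
  then have "B = transpose Y ** (A ** B)"
    by (simp add: matrix_transpose_mul)
  then show ?thesis by blast
qed



lemma mm_diff_l: "(A::'a::ring_1^'n^'n) ** (B - C) = A ** B - A ** C"
  by (simp add: matrix_matrix_mult_def vec_eq_iff sum_subtractf right_diff_distrib)
lemma mm_diff_r: "((A::'a::ring_1^'n^'n) - B) ** C = A ** C - B ** C"
  by (simp add: matrix_matrix_mult_def vec_eq_iff sum_subtractf left_diff_distrib)

lemma mpow_Suc2: "mpow M (Suc k) = mpow M k ** M"
proof (induction k)
  case 0 then show ?case by simp
next
  case (Suc k) then show ?case by (metis mpow.simps(2) matrix_mul_assoc)
qed

lemma mpow_add: "mpow M (a + b) = mpow M a ** mpow M b"
  by (induction a) (simp_all add: matrix_mul_assoc)

lemma comm_mpow: "A ** M = M ** A \<Longrightarrow> A ** mpow M k = mpow M k ** A"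
proof (induction k)
  case 0 then show ?case by simp
next
  case (Suc k) then show ?case by (metis mpow.simps(2) matrix_mul_assoc)
qed

lemma mpow_comm1: "M ** mpow M k = mpow M k ** M"
  by (metis mpow.simps(2) mpow_Suc2)

lemma intertw: "W ** mpow (A ** W) k = mpow (W ** A) k ** W"
proof (induction k)
  case 0 then show ?case by simp
next
  case (Suc k) then show ?case by (metis mpow.simps(2) matrix_mul_assoc)
qed

lemma intertw2: "mpow (A ** W) k ** A = A ** mpow (W ** A) k"
proof (induction k)
  case 0 then show ?case by simp
next
  case (Suc k) then show ?case by (metis mpow.simps(2) matrix_mul_assoc mpow_Suc2)
qed

lemma ctrans_mul: "ctrans (A ** B) = ctrans B ** ctrans A"
  by (simp add: ctrans_def matrix_matrix_mult_def vec_eq_iff mult.commute)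
lemma ctrans_ctrans[simp]: "ctrans (ctrans A) = A"
  by (simp add: ctrans_def vec_eq_iff)
lemma ctrans_diff: "ctrans (A - B) = ctrans A - ctrans B"
  by (simp add: ctrans_def vec_eq_iff)
lemma ctrans_one[simp]: "ctrans (mat 1) = mat 1"
  by (simp add: ctrans_def vec_eq_iff mat_def)
lemma ctrans_mpow: "ctrans (mpow M k) = mpow (ctrans M) k"
  by (induction k) (simp_all add: ctrans_mul mpow_comm1)

lemma ctrans_zero:
  assumes "ctrans A ** A = 0" shows "A = 0"
proof -
  have "\<forall>i j. A $ i $ j = 0"
  proof (intro allI)
    fix i j
    have "(ctrans A ** A) $ j $ j = (\<Sum>l\<in>UNIV. cnj (A $ l $ j) * A $ l $ j)"
      by (simp add: ctrans_def matrix_matrix_mult_def)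
    also have "\<dots> = (\<Sum>l\<in>UNIV. of_real ((norm (A $ l $ j))\<^sup>2))"
      by (simp only: complex_norm_square mult.commute)
    also have "\<dots> = of_real (\<Sum>l\<in>UNIV. (norm (A $ l $ j))\<^sup>2)"
      by simp
    finally have "of_real (\<Sum>l\<in>UNIV. (norm (A $ l $ j))\<^sup>2) = (0::complex)"
      using assms by simp
    then have "(\<Sum>l\<in>UNIV. (norm (A $ l $ j))\<^sup>2) = 0" by (simp only: of_real_eq_0_iff)
    then have "(norm (A $ i $ j))\<^sup>2 = 0"
      by (subst (asm) sum_nonneg_eq_0_iff) auto
    then show "A $ i $ j = 0" by simp
  qed
  then show ?thesis by (simp add: vec_eq_iff)
qed



definition drz :: "'n::finite cmat \<Rightarrow> 'n cmat \<Rightarrow> nat \<Rightarrow> bool" where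
  "drz M G m \<longleftrightarrow> M ** G = G ** M \<and> G ** M ** G = G \<and> mpow M (Suc m) ** G = mpow M m"

lemma G_pow1:
  assumes c: "M ** G = G ** M" and g: "G ** M ** G = G"
  shows "mpow G (Suc j) ** mpow M j = G"
proof (induction j)
  case 0 show ?case by simp
next
  case (Suc j)
  have "mpow G (Suc (Suc j)) ** mpow M (Suc j) = G ** (mpow G (Suc j) ** mpow M j) ** M"
    by (metis mpow.simps(2) mpow_Suc2 matrix_mul_assoc)
  also have "\<dots> = G ** G ** M" using Suc.IH by simp
  also have "\<dots> = G" by (metis c g matrix_mul_assoc)
  finally show ?case .
qed

lemma G_pow2:
  assumes c: "M ** G = G ** M" and g: "G ** M ** G = G"
  shows "mpow M j ** mpow G (Suc j) = G"
proof (induction j)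
  case 0 show ?case by simp
next
  case (Suc j)
  have "mpow M (Suc j) ** mpow G (Suc (Suc j)) = M ** (mpow M j ** mpow G (Suc j)) ** G"
    by (metis mpow.simps(2) mpow_Suc2 matrix_mul_assoc)
  also have "\<dots> = M ** G ** G" using Suc.IH by simp
  also have "\<dots> = G" by (metis c g matrix_mul_assoc)
  finally show ?case .
qed

lemma drz_lift:
  assumes "drz M G m" "m \<le> m'" shows "drz M G m'"
proof -
  obtain d where d: "m' = d + m" using assms(2) le_Suc_ex by (metis add.commute)
  have e: "mpow M (Suc m') = mpow M d ** mpow M (Suc m)"
    by (simp only: d mpow_add[symmetric] add_Suc_right)
  have "mpow M (Suc m') ** G = mpow M d ** (mpow M (Suc m) ** G)"
    by (simp only: e matrix_mul_assoc)
  also have "\<dots> = mpow M d ** mpow M m" using assms(1) by (simp add: drz_def)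
  also have "\<dots> = mpow M m'" by (simp only: d mpow_add)
  finally show ?thesis using assms(1) by (simp add: drz_def)
qed

lemma drz_unique_same:
  assumes 1: "drz M G1 m" and 2: "drz M G2 m" shows "G1 = G2"
proof -
  have c1: "M ** G1 = G1 ** M" and g1: "G1 ** M ** G1 = G1" and p1: "mpow M (Suc m) ** G1 = mpow M m"
    using 1 by (auto simp: drz_def)
  have c2: "M ** G2 = G2 ** M" and g2: "G2 ** M ** G2 = G2" and p2: "mpow M (Suc m) ** G2 = mpow M m"
    using 2 by (auto simp: drz_def)
  have p2': "mpow M m ** M ** G2 = mpow M m" using p2 by (simp only: mpow_Suc2)
  have "G1 = mpow G1 (Suc m) ** mpow M m" using G_pow1[OF c1 g1] by simp
  also have "\<dots> = mpow G1 (Suc m) ** (mpow M m ** M ** G2)"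
    using p2' by simp
  also have "\<dots> = mpow G1 (Suc m) ** (mpow M m ** M) ** G2"
    by (simp only: matrix_mul_assoc)
  also have "\<dots> = (mpow G1 (Suc m) ** mpow M m) ** M ** G2"
    by (simp add: matrix_mul_assoc)
  also have "\<dots> = G1 ** M ** G2" using G_pow1[OF c1 g1] by simp
  finally have a: "G1 = G1 ** M ** G2" .
  have cm: "G1 ** mpow M (Suc m) = mpow M (Suc m) ** G1" using comm_mpow c1 by metis
  have "G2 = mpow M m ** mpow G2 (Suc m)" using G_pow2[OF c2 g2] by simp
  also have "\<dots> = (G1 ** mpow M (Suc m)) ** mpow G2 (Suc m)"
    using p1 cm by simp
  also have "\<dots> = G1 ** (M ** mpow M m) ** mpow G2 (Suc m)"
    by simp
  also have "\<dots> = G1 ** M ** (mpow M m ** mpow G2 (Suc m))"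
    by (simp add: matrix_mul_assoc)
  also have "\<dots> = G1 ** M ** G2" using G_pow2[OF c2 g2] by simp
  finally show ?thesis using a by simp
qed

lemma drz_unique: "drz M G1 m1 \<Longrightarrow> drz M G2 m2 \<Longrightarrow> G1 = G2"
  by (meson drz_lift drz_unique_same max.cobounded1 max.cobounded2)

lemma plateau:
  fixes f :: "nat \<Rightarrow> nat"
  assumes "\<And>j. f (Suc j) \<le> f j" shows "\<exists>j. f (Suc j) = f j"
proof (rule ccontr)
  assume "\<not> ?thesis"
  then have lt: "\<And>j. f (Suc j) < f j" using assms le_neq_implies_less by blast
  have "f j + j \<le> f 0" for j
  proof (induction j)
    case 0 show ?case by simp
  next
    case (Suc j) then show ?case using lt[of j] by simp
  qed
  from this[of "Suc (f 0)"] show False by simp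
qed

lemma row_at:
  assumes "rank (mpow M k) = rank (mpow M (Suc k))"
  shows "\<exists>Z. mpow M k = Z ** mpow M (Suc k)"
  using rank_mul_eq[of M "mpow M k"] assms by simp

lemma row_plateau: "\<exists>k. rank (mpow M k) = rank (mpow M (Suc k))"
  using plateau[of "\<lambda>k. rank (mpow M k)"] rank_mul_le by (metis mpow.simps(2))

lemma col_plateau: "\<exists>j Y. mpow M j = mpow M (Suc j) ** Y"
proof -
  have tr: "transpose (mpow M (Suc j)) = transpose M ** transpose (mpow M j)" for j
    by (simp only: mpow_Suc2 matrix_transpose_mul)
  obtain j where j: "rank (transpose (mpow M (Suc j))) = rank (transpose (mpow M j))"
    using plateau[of "\<lambda>k. rank (transpose (mpow M k))"] rank_mul_le tr by metis
  then obtain Z where "transpose (mpow M j) = Z ** (transpose M ** transpose (mpow M j))"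
    using rank_mul_eq tr by metis
  then have "transpose (mpow M j) = Z ** transpose (mpow M (Suc j))" using tr by simp
  then have "transpose (transpose (mpow M j)) = transpose (Z ** transpose (mpow M (Suc j)))"
    by simp
  then have "mpow M j = mpow M (Suc j) ** transpose Z" by (simp add: matrix_transpose_mul)
  then show ?thesis by blast
qed

lemma liftY: assumes "mpow M j = mpow M (Suc j) ** Y" "j \<le> j'" shows "mpow M j' = mpow M (Suc j') ** Y"
  using assms(2)
proof (induction j' rule: dec_induct)
  case base then show ?case using assms(1) by simp
next
  case (step n) then show ?case by (metis mpow.simps(2) matrix_mul_assoc)
qed

lemma liftZ: assumes "mpow M j = Z ** mpow M (Suc j)" "j \<le> j'" shows "mpow M j' = Z ** mpow M (Suc j')"
  using assms(2)
proof (induction j' rule: dec_induct)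
  case base then show ?case using assms(1) by simp
next
  case (step n) then show ?case by (metis mpow_Suc2 matrix_mul_assoc)
qed

lemma F1: assumes h: "mpow M k = mpow M (Suc k) ** Y" shows "mpow M k = mpow M (k + j) ** mpow Y j"
proof (induction j)
  case 0 then show ?case by simp
next
  case (Suc j)
  have "mpow M (k + Suc j) ** mpow Y (Suc j) = mpow M j ** (mpow M (Suc k) ** Y) ** mpow Y j"
    by (metis mpow_add mpow.simps(2) matrix_mul_assoc add.commute add_Suc_right)
  also have "\<dots> = mpow M (k + j) ** mpow Y j" using h by (simp add: mpow_add add.commute)
  finally show ?case using Suc.IH by metis
qed

lemma F2: assumes h: "mpow M k = Z ** mpow M (Suc k)" shows "mpow M k = mpow Z j ** mpow M (k + j)"
proof (induction j)
  case 0 then show ?case by simp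
next
  case (Suc j)
  have "mpow Z (Suc j) ** mpow M (k + Suc j) = mpow Z j ** (Z ** mpow M (Suc k)) ** mpow M j"
    by (metis mpow_add mpow_Suc2 matrix_mul_assoc add_Suc_right add_Suc)
  also have "\<dots> = mpow Z j ** mpow M (k + j)" using h by (simp add: mpow_add matrix_mul_assoc)
  finally show ?case using Suc.IH by metis
qed



lemma drz_build:
  assumes hY: "mpow M k = mpow M (Suc k) ** Y" and hZ: "mpow M k = Z ** mpow M (Suc k)"
  shows "drz M (mpow M k ** mpow Y (Suc k)) k"
proof -
  define G where "G = mpow M k ** mpow Y (Suc k)"
  have f1: "\<And>j. mpow M k = mpow M (k + j) ** mpow Y j" using F1[OF hY] by blast
  have f2: "\<And>j. mpow M k = mpow Z j ** mpow M (k + j)" using F2[OF hZ] by blast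
  have pa: "mpow M (Suc k) ** mpow M k = mpow M (k + Suc k)"
    by (simp only: mpow_add[symmetric] add.commute)
  have "mpow Z (Suc k) ** mpow M k = mpow Z (Suc k) ** (mpow M (k + Suc k) ** mpow Y (Suc k))"
    using f1[of "Suc k"] by simp
  also have "\<dots> = (mpow Z (Suc k) ** mpow M (k + Suc k)) ** mpow Y (Suc k)"
    by (simp only: matrix_mul_assoc)
  also have "\<dots> = G" using f2[of "Suc k"] by (simp add: G_def)
  finally have gz: "G = mpow Z (Suc k) ** mpow M k" by simp
  have "M ** G = (mpow M (Suc k) ** Y) ** mpow Y k"
    by (simp add: G_def matrix_mul_assoc)
  also have "\<dots> = mpow M k ** mpow Y k" by (simp only: hY[symmetric])
  finally have mg: "M ** G = mpow M k ** mpow Y k" .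
  have "G ** M = mpow Z (Suc k) ** (mpow M k ** M)"
    by (simp only: gz matrix_mul_assoc)
  also have "\<dots> = mpow Z (Suc k) ** mpow M (Suc k)" by (simp only: mpow_Suc2)
  finally have gm0: "G ** M = mpow Z (Suc k) ** mpow M (Suc k)" .
  have e1: "mpow M (k + Suc k) = M ** mpow M (k + k)" by simp
  have "mpow M k ** mpow Y k = (mpow Z (Suc k) ** mpow M (k + Suc k)) ** mpow Y k"
    using f2[of "Suc k"] by simp
  also have "\<dots> = mpow Z (Suc k) ** M ** (mpow M (k + k) ** mpow Y k)"
    by (simp only: e1 matrix_mul_assoc)
  also have "\<dots> = mpow Z (Suc k) ** M ** mpow M k" using f1[of k] by simp
  also have "\<dots> = mpow Z (Suc k) ** mpow M (Suc k)" by (simp add: matrix_mul_assoc)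
  finally have gm: "G ** M = M ** G" using gm0 mg by simp
  have "G ** M ** G = (mpow Z (Suc k) ** mpow M (Suc k)) ** G" by (simp only: gm0)
  also have "\<dots> = mpow Z (Suc k) ** (mpow M (Suc k) ** mpow M k) ** mpow Y (Suc k)"
    by (simp only: G_def matrix_mul_assoc)
  also have "\<dots> = (mpow Z (Suc k) ** mpow M (k + Suc k)) ** mpow Y (Suc k)"
    by (simp only: pa matrix_mul_assoc)
  also have "\<dots> = G" using f2[of "Suc k"] by (simp add: G_def)
  finally have gmg: "G ** M ** G = G" .
  have "mpow M (Suc k) ** G = (mpow M (Suc k) ** mpow M k) ** mpow Y (Suc k)"
    by (simp only: G_def matrix_mul_assoc)
  also have "\<dots> = mpow M k" using f1[of "Suc k"] pa by metis
  finally have p: "mpow M (Suc k) ** G = mpow M k" .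
  show ?thesis unfolding drz_def G_def[symmetric] using gm gmg p by simp
qed

lemma drz_exists: "\<exists>G m. drz M G m"
proof -
  obtain j Y where jY: "mpow M j = mpow M (Suc j) ** Y" using col_plateau by blast
  obtain k where "rank (mpow M k) = rank (mpow M (Suc k))" using row_plateau by blast
  then obtain Z where kZ: "mpow M k = Z ** mpow M (Suc k)" using row_at by blast
  have "mpow M (max j k) = mpow M (Suc (max j k)) ** Y" using liftY[OF jY] by simp
  moreover have "mpow M (max j k) = Z ** mpow M (Suc (max j k))" using liftZ[OF kZ] by simp
  ultimately show ?thesis using drz_build by blast
qed

lemma drz_at:
  assumes d: "drz M G m" and hZ: "mpow M k = Z ** mpow M (Suc k)"
  shows "mpow M (Suc k) ** G = mpow M k"
proof -
  have p: "mpow M (Suc m) ** G = mpow M m" using d by (simp add: drz_def)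
  have "mpow M (k + m) = mpow M k ** (mpow M (Suc m) ** G)" by (simp only: p mpow_add)
  also have "\<dots> = mpow M (k + Suc m) ** G" by (simp only: mpow_add matrix_mul_assoc)
  also have "\<dots> = mpow M (k + m) ** M ** G" by (simp only: add_Suc_right mpow_Suc2)
  finally have a: "mpow M (k + m) = mpow M (k + m) ** M ** G" .
  have "mpow M k = mpow Z m ** mpow M (k + m)" using F2[OF hZ] by blast
  also have "\<dots> = mpow Z m ** (mpow M (k + m) ** M ** G)" using a by simp
  also have "\<dots> = (mpow Z m ** mpow M (k + m)) ** M ** G" by (simp only: matrix_mul_assoc)
  also have "\<dots> = mpow M k ** M ** G" using F2[OF hZ] by simp
  also have "\<dots> = mpow M (Suc k) ** G" by (simp only: mpow_Suc2)
  finally show ?thesis by simp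
qed

lemma nil_pow:
  assumes c: "M ** G = G ** M" and g: "G ** M ** G = G"
  shows "mpow (M - M ** G ** M) (Suc j) = mpow M (Suc j) - mpow M (Suc (Suc j)) ** G"
proof (induction j)
  case 0
  have "M ** G ** M = M ** M ** G" by (metis c matrix_mul_assoc)
  then show ?case by simp
next
  case (Suc j)
  let ?P = "mpow M (Suc j)" and ?Q = "mpow M (Suc (Suc j)) ** G"
  have cg: "\<And>i. G ** mpow M i = mpow M i ** G" using comm_mpow c by metis
  have a1: "M ** ?P = mpow M (Suc (Suc j))" by simp
  have a2: "M ** ?Q = mpow M (Suc (Suc (Suc j))) ** G" by (simp add: matrix_mul_assoc)
  have "M ** G ** M ** ?P = M ** (G ** mpow M (Suc (Suc j)))" by (simp add: matrix_mul_assoc)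
  also have "\<dots> = M ** (mpow M (Suc (Suc j)) ** G)" by (simp only: cg)
  finally have a3: "M ** G ** M ** ?P = mpow M (Suc (Suc (Suc j))) ** G" by (simp add: matrix_mul_assoc)
  have "M ** G ** M ** ?Q = M ** G ** (M ** mpow M (Suc (Suc j))) ** G" by (simp only: matrix_mul_assoc)
  also have "\<dots> = M ** G ** (mpow M (Suc (Suc j)) ** M) ** G" by (simp only: mpow_comm1)
  also have "\<dots> = M ** (G ** mpow M (Suc (Suc j))) ** M ** G" by (simp only: matrix_mul_assoc)
  also have "\<dots> = M ** (mpow M (Suc (Suc j)) ** G) ** M ** G" by (simp only: cg)
  also have "\<dots> = M ** mpow M (Suc (Suc j)) ** (G ** M ** G)" by (simp only: matrix_mul_assoc)
  also have "\<dots> = mpow M (Suc (Suc (Suc j))) ** G" by (simp add: g)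
  finally have a4: "M ** G ** M ** ?Q = mpow M (Suc (Suc (Suc j))) ** G" .
  have "mpow (M - M ** G ** M) (Suc (Suc j)) = (M - M ** G ** M) ** (?P - ?Q)"
    using Suc.IH by simp
  also have "\<dots> = (M ** ?P - M ** ?Q) - (M ** G ** M ** ?P - M ** G ** M ** ?Q)"
    by (simp add: mm_diff_l mm_diff_r algebra_simps)
  also have "\<dots> = mpow M (Suc (Suc j)) - mpow M (Suc (Suc (Suc j))) ** G"
    by (simp only: a1 a2 a3 a4) simp
  finally show ?case .
qed

lemma nil_drz:
  assumes c: "M ** G = G ** M" and g: "G ** M ** G = G" and n: "nilpotent_mat (M - M ** G ** M)"
  shows "\<exists>m. drz M G m"
proof -
  obtain n where n: "mpow (M - M ** G ** M) n = 0" using n by (auto simp: nilpotent_mat_def)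
  show ?thesis
  proof (cases n)
    case 0
    then have "mat 1 = (0::'a cmat)" using n by simp
    then have "\<And>X::'a cmat. X = 0" by (metis matrix_mul_rid times0_right)
    then have eq: "\<And>X Y::'a cmat. X = Y" by metis
    then have "drz M G 0" unfolding drz_def by blast
    then show ?thesis by blast
  next
    case (Suc j)
    then have "mpow M (Suc j) - mpow M (Suc (Suc j)) ** G = 0" using n nil_pow[OF c g] by simp
    then have "drz M G (Suc j)" using c g by (simp add: drz_def)
    then show ?thesis by blast
  qed
qed

lemma drz_nil:
  assumes d: "drz M G m" shows "nilpotent_mat (M - M ** G ** M)"
proof -
  have c: "M ** G = G ** M" and g: "G ** M ** G = G" and p: "mpow M (Suc m) ** G = mpow M m"
    using d by (auto simp: drz_def)
  have "mpow M (Suc (Suc m)) ** G = M ** (mpow M (Suc m) ** G)"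
    by (simp only: mpow.simps(2) matrix_mul_assoc)
  also have "\<dots> = mpow M (Suc m)" using p by simp
  finally have "mpow (M - M ** G ** M) (Suc m) = 0" using nil_pow[OF c g, of m] by simp
  then show ?thesis unfolding nilpotent_mat_def by blast
qed



lemma ctrans3: "ctrans (A ** B ** C) = ctrans C ** ctrans B ** ctrans A" for A B C :: "'n::finite cmat"
  by (simp add: ctrans_mul matrix_mul_assoc)

lemma mp_unique:
  fixes K X Y :: "'n::finite cmat"
  assumes x1: "K ** X ** K = K" and x2: "X ** K ** X = X"
    and x3: "ctrans (K ** X) = K ** X" and x4: "ctrans (X ** K) = X ** K"
    and y1: "K ** Y ** K = K" and y2: "Y ** K ** Y = Y"
    and y3: "ctrans (K ** Y) = K ** Y" and y4: "ctrans (Y ** K) = Y ** K"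
  shows "X = Y"
proof -
  have kc1: "ctrans K = ctrans K ** K ** Y"
  proof -
    have "ctrans K = ctrans (K ** Y ** K)" using y1 by simp
    also have "\<dots> = ctrans K ** ctrans (K ** Y)" by (simp add: ctrans_mul matrix_mul_assoc)
    also have "\<dots> = ctrans K ** K ** Y" using y3 by (simp add: matrix_mul_assoc)
    finally show ?thesis .
  qed
  have kc2: "ctrans K = X ** K ** ctrans K"
  proof -
    have "ctrans K = ctrans (K ** X ** K)" using x1 by simp
    also have "\<dots> = ctrans (X ** K) ** ctrans K" by (simp add: ctrans_mul matrix_mul_assoc)
    also have "\<dots> = X ** K ** ctrans K" using x4 by simp
    finally show ?thesis .
  qed
  have "X = X ** (K ** X)" using x2 by (simp add: matrix_mul_assoc)
  also have "\<dots> = X ** (ctrans X ** ctrans K)" using x3 by (simp add: ctrans_mul)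
  also have "\<dots> = X ** (ctrans X ** (ctrans K ** K ** Y))" using kc1 by simp
  also have "\<dots> = X ** ctrans (K ** X) ** K ** Y" by (simp add: ctrans_mul matrix_mul_assoc)
  also have "\<dots> = (X ** K ** X) ** K ** Y" using x3 by (simp add: matrix_mul_assoc)
  also have "\<dots> = X ** K ** Y" using x2 by simp
  finally have a: "X = X ** K ** Y" .
  have "Y = (Y ** K) ** Y" using y2 by simp
  also have "\<dots> = (ctrans K ** ctrans Y) ** Y" using y4 by (simp add: ctrans_mul)
  also have "\<dots> = ((X ** K ** ctrans K) ** ctrans Y) ** Y" using kc2 by simp
  also have "\<dots> = X ** K ** ctrans (Y ** K) ** Y" by (simp add: ctrans_mul matrix_mul_assoc)
  also have "\<dots> = X ** (K ** Y ** K) ** Y" using y4 by (simp add: matrix_mul_assoc)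
  also have "\<dots> = X ** K ** Y" using y1 by (simp add: matrix_mul_assoc)
  finally show ?thesis using a by simp
qed

lemma herm_nil_step:
  assumes h: "ctrans T = T" and z: "mpow T (Suc (Suc j)) = 0"
  shows "mpow T (Suc j) = 0"
proof -
  have "ctrans (mpow T (Suc j)) ** mpow T (Suc j) = mpow T (Suc j) ** mpow T (Suc j)"
    by (simp only: ctrans_mpow h)
  also have "\<dots> = mpow T (j + Suc (Suc j))" by (simp only: mpow_add[symmetric]) simp
  also have "\<dots> = mpow T j ** mpow T (Suc (Suc j))" by (simp only: mpow_add)
  also have "\<dots> = 0" using z by simp
  finally show ?thesis by (rule ctrans_zero)
qed

lemma herm_nil:
  assumes h: "ctrans T = T" and z: "mpow T n = 0" shows "T = 0"
proof -
  have "mpow T (Suc n) = 0" using z by simp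
  then show ?thesis
  proof (induction n)
    case 0 then show ?case by simp
  next
    case (Suc n) then show ?case using herm_nil_step[OF h] by blast
  qed
qed

lemma mp_exists:
  fixes K :: "'n::finite cmat"
  shows "\<exists>X. K ** X ** K = K \<and> X ** K ** X = X \<and> ctrans (K ** X) = K ** X \<and> ctrans (X ** K) = X ** K"
proof -
  define F where "F = ctrans K ** K"
  have hF: "ctrans F = F" by (simp add: F_def ctrans_mul)
  obtain G m where d: "drz F G m" using drz_exists by blast
  have c: "F ** G = G ** F" and g: "G ** F ** G = G" and p: "mpow F (Suc m) ** G = mpow F m"
    using d by (auto simp: drz_def)
  have d': "drz F (ctrans G) m"
  proof -
    have "F ** ctrans G = ctrans (G ** F)" using hF by (simp add: ctrans_mul)
    also have "\<dots> = ctrans (F ** G)" using c by simp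
    also have "\<dots> = ctrans G ** F" using hF by (simp add: ctrans_mul)
    finally have 1: "F ** ctrans G = ctrans G ** F" .
    have 2: "ctrans G ** F ** ctrans G = ctrans G"
      using g hF by (metis ctrans3)
    have "mpow F (Suc m) ** ctrans G = ctrans (G ** mpow F (Suc m))"
      by (simp only: ctrans_mul ctrans_mpow hF ctrans_ctrans)
    also have "\<dots> = ctrans (mpow F (Suc m) ** G)" using comm_mpow c by metis
    also have "\<dots> = mpow F m" using p hF by (simp add: ctrans_mpow)
    finally show ?thesis using 1 2 by (simp add: drz_def)
  qed
  have hG: "ctrans G = G" using drz_unique[OF d' d] .
  define T where "T = F - F ** G ** F"
  have hT: "ctrans T = T" unfolding T_def using hF hG by (simp add: ctrans_diff ctrans3)
  obtain n where "mpow T n = 0" using drz_nil[OF d] by (auto simp: nilpotent_mat_def T_def)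
  then have "T = 0" using herm_nil[OF hT] by blast
  then have fgf: "F ** G ** F = F" by (simp add: T_def)
  define U where "U = mat 1 - G ** F"
  have "F ** U = 0" using fgf by (simp add: U_def mm_diff_l matrix_mul_assoc)
  moreover have "ctrans (K ** U) ** (K ** U) = ctrans U ** (F ** U)"
    by (simp add: ctrans_mul F_def matrix_mul_assoc)
  ultimately have "ctrans (K ** U) ** (K ** U) = 0" by simp
  then have "K ** U = 0" by (rule ctrans_zero)
  then have kgf: "K ** G ** F = K" by (simp add: U_def mm_diff_l matrix_mul_assoc)
  define X where "X = G ** ctrans K"
  have 1: "K ** X ** K = K" using kgf by (simp add: X_def F_def matrix_mul_assoc)
  have "X ** K ** X = G ** F ** G ** ctrans K" by (simp add: X_def F_def matrix_mul_assoc)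
  then have 2: "X ** K ** X = X" using g by (simp add: X_def)
  have 3: "ctrans (K ** X) = K ** X" using hG by (simp add: X_def ctrans_mul matrix_mul_assoc)
  have "ctrans (X ** K) = F ** G" using hG hF by (simp add: X_def F_def ctrans_mul matrix_mul_assoc)
  then have 4: "ctrans (X ** K) = X ** K" using c by (simp add: X_def F_def matrix_mul_assoc)
  show ?thesis using 1 2 3 4 by blast
qed

lemma mp_props:
  fixes K :: "'n::finite cmat"
  shows "K ** mp_inv K ** K = K \<and> mp_inv K ** K ** mp_inv K = mp_inv K
    \<and> ctrans (K ** mp_inv K) = K ** mp_inv K \<and> ctrans (mp_inv K ** K) = mp_inv K ** K"
proof -
  have "\<exists>!X. K ** X ** K = K \<and> X ** K ** X = X \<and> ctrans (K ** X) = K ** X \<and> ctrans (X ** K) = X ** K"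
    using mp_exists mp_unique by blast
  then show ?thesis unfolding mp_inv_def by (rule theI')
qed



lemma ind_Z: "\<exists>Z. mpow M (ind M) = Z ** mpow M (Suc (ind M))"
proof -
  have "rank (mpow M (ind M)) = rank (mpow M (Suc (ind M)))"
    unfolding ind_def using row_plateau by (rule LeastI_ex)
  then show ?thesis by (rule row_at)
qed

lemma ind_Zk: "ind M \<le> k \<Longrightarrow> \<exists>Z. mpow M k = Z ** mpow M (Suc k)"
  using ind_Z liftZ by metis

lemma range_id:
  assumes "mrange X \<subseteq> mrange R" and "E ** R = R"
  shows "E ** X = X"
proof -
  have "(E ** X) *v v = X *v v" for v
  proof -
    have "X *v v \<in> mrange R" using assms(1) by (auto simp: mrange_def)
    then obtain u where u: "X *v v = R *v u" by (auto simp: mrange_def)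
    have "(E ** X) *v v = E *v (R *v u)" by (simp add: matrix_vector_mul_assoc[symmetric] u)
    also have "\<dots> = R *v u" by (simp add: matrix_vector_mul_assoc assms(2))
    finally show ?thesis using u by simp
  qed
  then show ?thesis by (simp add: matrix_eq)
qed

lemma range_sub: "mrange (R ** T) \<subseteq> mrange R"
  by (auto simp: mrange_def matrix_vector_mul_assoc[symmetric])

theorem corollary4p3:
  fixes A W :: "complex^'n::finite^'n"
  shows "(\<exists>!X. is_wcore (wdrazin A W) W X)
    \<and> wcoreEP A W = ((wdrazin A W ** W) ** (wdrazin A W ** W)) ** wcore (wdrazin A W) W"
proof -
  define M where "M = A ** W"
  define N where "N = W ** A"
  define k where "k = max (ind (A ** W)) (ind (W ** A))"
  obtain Z1 where ZM: "mpow M k = Z1 ** mpow M (Suc k)"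
    using ind_Zk[of M k] by (auto simp: k_def M_def)
  obtain Z2 where ZN: "mpow N k = Z2 ** mpow N (Suc k)"
    using ind_Zk[of N k] by (auto simp: k_def N_def)
  obtain G m where dG: "drz M G m" using drz_exists by blast
  obtain H n where dH: "drz N H n" using drz_exists by blast
  have c: "M ** G = G ** M" and g: "G ** M ** G = G" using dG by (auto simp: drz_def)
  have GM: "mpow M (Suc k) ** G = mpow M k" using drz_at[OF dG ZM] .
  have HN: "mpow N (Suc k) ** H = mpow N k" using drz_at[OF dH ZN] .
  have cG: "\<And>i. G ** mpow M i = mpow M i ** G" using comm_mpow c by metis
  have GM2: "G ** mpow M (Suc k) = mpow M k" using GM cG by metis
  have Grange: "G = mpow M k ** mpow G (Suc k)" using G_pow2[OF c g] by simp
  define E where "E = M ** G"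
  have GGM: "G ** G ** M = G"
  proof -
    have "G ** G ** M = G ** (G ** M)" by (simp only: matrix_mul_assoc)
    also have "\<dots> = G ** (M ** G)" by (simp only: c)
    also have "\<dots> = G" using g by (simp only: matrix_mul_assoc)
    finally show ?thesis .
  qed
  have MGG: "M ** G ** G = G" using g c by simp
  have GE: "G ** E = G" using g by (simp add: E_def matrix_mul_assoc)
  have EG: "E ** G = G" using MGG by (simp add: E_def)
  have EE: "E ** E = E"
  proof -
    have "E ** E = M ** (G ** M ** G)" by (simp only: E_def matrix_mul_assoc)
    then show ?thesis using g by (simp add: E_def)
  qed
  have GME: "G ** M = E" using c by (simp add: E_def)
  have EMk: "E ** mpow M k = mpow M k"
  proof -
    have "E ** mpow M k = M ** (G ** mpow M k)" by (simp add: E_def matrix_mul_assoc)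
    also have "\<dots> = M ** mpow M k ** G" by (simp add: cG matrix_mul_assoc)
    also have "\<dots> = mpow M k" using GM by simp
    finally show ?thesis .
  qed
  define B where "B = G ** G ** A"
  have isB: "is_wdrazin A W B"
  proof -
    have 1: "A ** W ** B = B ** W ** A"
    proof -
      have "A ** W ** B = (M ** G ** G) ** A" by (simp add: B_def M_def matrix_mul_assoc)
      also have "\<dots> = (G ** G ** M) ** A" using MGG GGM by simp
      also have "\<dots> = B ** W ** A" by (simp add: B_def M_def matrix_mul_assoc)
      finally show ?thesis .
    qed
    have 2: "B ** W ** A ** W ** B = B"
    proof -
      have "B ** W ** A ** W ** B = (G ** G ** M) ** (M ** G ** G) ** A"
        by (simp add: B_def M_def matrix_mul_assoc)
      also have "\<dots> = B" using MGG GGM by (simp add: B_def)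
      finally show ?thesis .
    qed
    have 3: "(A - A ** W ** B ** W ** A) ** W = M - M ** G ** M"
    proof -
      have "A ** W ** B ** W ** A ** W = M ** (G ** G ** M) ** M"
        by (simp add: B_def M_def matrix_mul_assoc)
      also have "\<dots> = M ** G ** M" using GGM by simp
      finally show ?thesis by (simp add: mm_diff_r M_def)
    qed
    show ?thesis unfolding is_wdrazin_def using 1 2 3 drz_nil[OF dG] by simp
  qed
  have uniqB: "X = B" if "is_wdrazin A W X" for X
  proof -
    have x1: "A ** W ** X = X ** W ** A" and x2: "X ** W ** A ** W ** X = X"
      and x3: "nilpotent_mat ((A - A ** W ** X ** W ** A) ** W)"
      using that by (auto simp: is_wdrazin_def)
    have c': "M ** (X ** W) = (X ** W) ** M"
      using x1 by (simp add: M_def matrix_mul_assoc)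
    have g': "(X ** W) ** M ** (X ** W) = X ** W"
      using x2 by (simp add: M_def matrix_mul_assoc)
    have "(A - A ** W ** X ** W ** A) ** W = M - M ** (X ** W) ** M"
      by (simp add: mm_diff_r M_def matrix_mul_assoc)
    then obtain m' where "drz M (X ** W) m'" using nil_drz[OF c' g'] x3 by auto
    then have XW: "X ** W = G" using drz_unique dG by blast
    have "X = (X ** W) ** (A ** W ** X)" using x2 by (simp add: matrix_mul_assoc)
    also have "\<dots> = (X ** W) ** (X ** W) ** A" using x1 by (simp add: matrix_mul_assoc)
    also have "\<dots> = B" using XW by (simp add: B_def)
    finally show ?thesis .
  qed
  have wdB: "wdrazin A W = B"
    unfolding wdrazin_def using isB uniqB by (rule the_equality)
  have BW: "B ** W = G" using GGM by (simp add: B_def M_def matrix_mul_assoc)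
  have WBW: "W ** B ** W = W ** G" by (simp only: matrix_mul_assoc[symmetric] BW)
  define P where "P = mpow N k ** mp_inv (mpow N k)"
  have hP: "ctrans P = P" using mp_props unfolding P_def by blast
  have PN: "P ** mpow N k = mpow N k" using mp_props unfolding P_def by blast
  have WMk: "W ** mpow M k = mpow N k ** W" unfolding M_def N_def by (rule intertw)
  have MkA: "mpow M j ** A = A ** mpow N j" for j unfolding M_def N_def by (rule intertw2)
  have PWG: "P ** W ** G = W ** G"
  proof -
    have "P ** W ** G = P ** W ** (mpow M k ** mpow G (Suc k))" by (simp only: Grange[symmetric])
    also have "\<dots> = P ** (W ** mpow M k) ** mpow G (Suc k)" by (simp only: matrix_mul_assoc)
    also have "\<dots> = P ** (mpow N k ** W) ** mpow G (Suc k)" by (simp only: WMk)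
    also have "\<dots> = (P ** mpow N k) ** W ** mpow G (Suc k)" by (simp only: matrix_mul_assoc)
    also have "\<dots> = mpow N k ** W ** mpow G (Suc k)" by (simp only: PN)
    also have "\<dots> = W ** mpow M k ** mpow G (Suc k)" by (simp only: WMk)
    also have "\<dots> = W ** (mpow M k ** mpow G (Suc k))" by (simp only: matrix_mul_assoc)
    also have "\<dots> = W ** G" by (simp only: Grange[symmetric])
    finally show ?thesis .
  qed
  have NS: "mpow N (Suc k) = W ** mpow M k ** A"
  proof -
    have "mpow N (Suc k) = mpow N k ** W ** A" by (simp only: mpow_Suc2 N_def matrix_mul_assoc)
    also have "\<dots> = W ** mpow M k ** A" by (simp add: WMk)
    finally show ?thesis .
  qed
  have WGAN: "W ** G ** A ** mpow N (Suc k) = mpow N (Suc k)"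
  proof -
    have "W ** G ** A ** mpow N (Suc k) = W ** G ** (A ** mpow N (Suc k))" by (simp only: matrix_mul_assoc)
    also have "\<dots> = W ** G ** (mpow M (Suc k) ** A)" by (simp only: MkA)
    also have "\<dots> = W ** (G ** mpow M (Suc k)) ** A" by (simp only: matrix_mul_assoc)
    also have "\<dots> = W ** mpow M k ** A" by (simp only: GM2)
    also have "\<dots> = mpow N (Suc k)" by (simp only: NS)
    finally show ?thesis .
  qed
  have WGAP: "W ** G ** A ** P = P"
  proof -
    have "W ** G ** A ** mpow N k = W ** G ** A ** (mpow N (Suc k) ** H)" by (simp only: HN)
    also have "\<dots> = (W ** G ** A ** mpow N (Suc k)) ** H" by (simp only: matrix_mul_assoc)
    also have "\<dots> = mpow N (Suc k) ** H" by (simp only: WGAN)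
    also have "\<dots> = mpow N k" by (simp only: HN)
    finally have wn: "W ** G ** A ** mpow N k = mpow N k" .
    show ?thesis unfolding P_def using wn by (simp add: matrix_mul_assoc)
  qed
  have NkWG: "mpow N k = W ** G ** (mpow M (Suc k) ** A ** H)"
  proof -
    have "mpow N k = mpow N (Suc k) ** H" by (simp only: HN)
    also have "\<dots> = W ** mpow M k ** A ** H" by (simp only: NS)
    also have "\<dots> = W ** (G ** mpow M (Suc k)) ** A ** H" by (simp only: GM2)
    also have "\<dots> = W ** G ** (mpow M (Suc k) ** A ** H)" by (simp only: matrix_mul_assoc)
    finally show ?thesis .
  qed
  define Xc where "Xc = E ** A ** P"
  have isXc: "is_wcore B W Xc"
  proof -
    have weA: "W ** E ** A = W ** G ** (M ** A)" using c by (simp add: E_def matrix_mul_assoc)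
    have "P ** (W ** E ** A) = P ** (W ** G ** (M ** A))" using weA by simp
    also have "\<dots> = (P ** W ** G) ** (M ** A)" by (simp only: matrix_mul_assoc)
    also have "\<dots> = W ** G ** (M ** A)" by (simp only: PWG)
    also have "\<dots> = W ** E ** A" using weA by simp
    finally have PWEA: "P ** (W ** E ** A) = W ** E ** A" .
    have 1: "B ** ((W ** Xc) ** (W ** Xc)) = Xc"
    proof -
      have "B ** ((W ** Xc) ** (W ** Xc)) = G ** G ** M ** E ** A ** (P ** (W ** E ** A)) ** P"
        by (simp add: B_def Xc_def M_def matrix_mul_assoc)
      also have "\<dots> = G ** G ** M ** E ** A ** (W ** E ** A) ** P" by (simp only: PWEA)
      also have "\<dots> = (G ** G ** M) ** E ** M ** E ** A ** P"
        by (simp add: M_def matrix_mul_assoc)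
      also have "\<dots> = G ** E ** M ** E ** A ** P" by (simp only: GGM)
      also have "\<dots> = G ** M ** E ** A ** P" by (simp only: GE)
      also have "\<dots> = E ** E ** A ** P" by (simp only: GME)
      also have "\<dots> = Xc" by (simp only: EE Xc_def)
      finally show ?thesis .
    qed
    have 2: "ctrans (W ** B ** W ** Xc) = W ** B ** W ** Xc"
    proof -
      have "W ** B ** W ** Xc = W ** (G ** E) ** A ** P"
        by (simp add: WBW Xc_def matrix_mul_assoc)
      also have "\<dots> = P" by (simp add: GE WGAP)
      finally show ?thesis using hP by simp
    qed
    have 3: "Xc ** W ** ((B ** W) ** (B ** W)) = B ** W"
    proof -
      have "Xc ** W ** ((B ** W) ** (B ** W)) = E ** A ** (P ** W ** G) ** G"
        by (simp add: BW Xc_def matrix_mul_assoc)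
      also have "\<dots> = E ** (M ** G ** G)" by (simp add: PWG M_def matrix_mul_assoc)
      also have "\<dots> = B ** W" by (simp add: MGG EG BW)
      finally show ?thesis .
    qed
    show ?thesis unfolding is_wcore_def using 1 2 3 by blast
  qed
  have uniqXc: "X = Xc" if "is_wcore B W X" for X
  proof -
    have h1: "B ** ((W ** X) ** (W ** X)) = X" and h2: "ctrans (W ** B ** W ** X) = W ** B ** W ** X"
      and h3: "X ** W ** ((B ** W) ** (B ** W)) = B ** W"
      using that by (auto simp: is_wcore_def)
    have "G ** (X ** W ** X) = B ** W ** X ** W ** X" by (simp add: BW matrix_mul_assoc)
    also have "\<dots> = X" using h1 by (simp add: matrix_mul_assoc)
    finally have h1': "G ** (X ** W ** X) = X" .
    have h2': "ctrans (W ** G ** X) = W ** G ** X" using h2 WBW by simp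
    have h3': "X ** W ** G ** G = G" using h3 BW by (simp add: matrix_mul_assoc)
    have XWG: "X ** W ** G = E"
    proof -
      have "X ** W ** G = X ** W ** (G ** G ** M)" using GGM by simp
      also have "\<dots> = (X ** W ** G ** G) ** M" by (simp add: matrix_mul_assoc)
      also have "\<dots> = E" using h3' c by (simp add: E_def)
      finally show ?thesis .
    qed
    define Q where "Q = W ** G ** X"
    have QWG: "Q ** (W ** G) = W ** G"
    proof -
      have "Q ** (W ** G) = W ** G ** (X ** W ** G)" by (simp add: Q_def matrix_mul_assoc)
      also have "\<dots> = W ** G ** E" by (simp only: XWG)
      also have "\<dots> = W ** (G ** E)" by (simp only: matrix_mul_assoc)
      also have "\<dots> = W ** G" by (simp only: GE)
      finally show ?thesis .
    qed
    have PQ: "P ** Q = Q" using PWG by (simp add: Q_def matrix_mul_assoc)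
    have QP: "Q ** P = P"
    proof -
      have "Q ** mpow N k = Q ** (W ** G) ** (mpow M (Suc k) ** A ** H)"
        by (subst NkWG) (simp only: matrix_mul_assoc)
      also have "\<dots> = W ** G ** (mpow M (Suc k) ** A ** H)" by (simp only: QWG)
      also have "\<dots> = mpow N k" by (simp only: NkWG[symmetric])
      finally have qn: "Q ** mpow N k = mpow N k" .
      show ?thesis unfolding P_def using qn by (simp add: matrix_mul_assoc)
    qed
    have hQ: "ctrans Q = Q" using h2' by (simp add: Q_def)
    have QeqP: "Q = P"
    proof -
      have "Q = ctrans (P ** Q)" using PQ hQ by simp
      also have "\<dots> = Q ** P" using hQ hP by (simp add: ctrans_mul)
      finally show ?thesis using QP by simp
    qed
    have EX: "E ** X = X"
    proof -
      have "E ** X = E ** (G ** (X ** W ** X))" by (simp only: h1')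
      also have "\<dots> = (E ** G) ** (X ** W ** X)" by (simp only: matrix_mul_assoc)
      also have "\<dots> = G ** (X ** W ** X)" by (simp only: EG)
      also have "\<dots> = X" by (simp only: h1')
      finally show ?thesis .
    qed
    have "Xc = E ** (A ** W) ** G ** X" using QeqP[symmetric] by (simp add: Xc_def Q_def matrix_mul_assoc)
    also have "\<dots> = (E ** E) ** X" by (simp add: E_def M_def matrix_mul_assoc)
    also have "\<dots> = X" by (simp add: EE EX)
    finally show ?thesis by simp
  qed
  have ex1: "\<exists>!X. is_wcore B W X" using isXc uniqXc by blast
  have wcB: "wcore B W = Xc" unfolding wcore_def using isXc uniqXc by (rule the_equality)
  define X1 where "X1 = G ** G ** A ** P"
  have isX1: "is_wcoreEP A W X1"
  proof -
    have a: "W ** A ** W ** X1 = P"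
    proof -
      have "W ** A ** W ** X1 = W ** (M ** G ** G) ** A ** P"
        by (simp add: X1_def M_def matrix_mul_assoc)
      also have "\<dots> = P" by (simp add: MGG WGAP)
      finally show ?thesis .
    qed
    have "X1 = (mpow M k ** mpow G (Suc k)) ** G ** A ** P" by (simp only: X1_def Grange[symmetric])
    also have "\<dots> = mpow M k ** (mpow G (Suc k) ** G ** A ** P)" by (simp only: matrix_mul_assoc)
    finally have "X1 = mpow M k ** (mpow G (Suc k) ** G ** A ** P)" .
    then have b: "mrange X1 \<subseteq> mrange (mpow M k)" using range_sub by metis
    show ?thesis unfolding is_wcoreEP_def Let_def
      using a b by (simp add: P_def k_def N_def M_def)
  qed
  have uniqX1: "X = X1" if "is_wcoreEP A W X" for X
  proof -
    have a: "W ** A ** W ** X = P" and b: "mrange X \<subseteq> mrange (mpow M k)"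
      using that by (simp_all add: is_wcoreEP_def Let_def P_def k_def N_def M_def)
    have EX: "E ** X = X" using range_id[OF b EMk] .
    have "X = (G ** M) ** X" using EX c by (simp add: E_def)
    also have "\<dots> = (G ** G ** M) ** M ** X" by (simp add: GGM)
    also have "\<dots> = G ** G ** A ** (W ** A ** W ** X)" by (simp add: M_def matrix_mul_assoc)
    also have "\<dots> = X1" by (simp add: a X1_def)
    finally show ?thesis .
  qed
  have wcE: "wcoreEP A W = X1" unfolding wcoreEP_def using isX1 uniqX1 by (rule the_equality)
  have final: "X1 = ((B ** W) ** (B ** W)) ** Xc"
  proof -
    have "((B ** W) ** (B ** W)) ** Xc = G ** (G ** E) ** A ** P"
      by (simp add: BW Xc_def matrix_mul_assoc)
    also have "\<dots> = X1" by (simp add: GE X1_def)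
    finally show ?thesis by simp
  qed
  show ?thesis using ex1 wcB wcE final wdB by simp
qed


end
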